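(* Let $A\in\mathbb{C}^{m\times n}$ and $B\in\mathbb{C}^{n\times p}$. Then each of the following sets of matrices is contained in $\{(AB)^{(1,2)}\}$: $$\{(A^{(1,2)}AB)^{(1,2)}A^{(1,2)}\},\quad \{B^{(1,2)}(ABB^{(1,2)})^{(1,2)}\},\quad \{(A^{*}AB)^{(1,2)}A^{*}\},\quad \{B^{*}(ABB^{*})^{(1,2)}\},\quad \{(AA^{*}AB)^{(1,2)}AA^{*}\},$$ $$\{B^{*}B(ABB^{*}B)^{(1,2)}\},\quad \{B^{(1,2)}(A^{(1,2)}ABB^{(1,2)})^{(1,2)}A^{(1,2)}\},\quad \{B^{*}(A^{*}ABB^{*})^{(1,2)}A^{*}\},\quad \{B^{*}B(AA^{*}ABB^{*}B)^{(1,2)}AA^{*}\}.$$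
   Context: For a complex matrix $X$, $X^*$ is its conjugate transpose, $r(X)$ its rank and $\mathscr{R}(X)$ its column space. For $X\in\mathbb{C}^{p\times q}$, a matrix $G\in\mathbb{C}^{q\times p}$ is called an $\{i,\ldots,j\}$-generalized inverse of $X$ (written $X^{(i,\ldots,j)}$) if it satisfies the equations numbered $i,\ldots,j$ among the four Penrose equations (i) $XGX=X$, (ii) $GXG=G$, (iii) $(XG)^*=XG$, (iv) $(GX)^*=GX$; $\{X^{(i,\ldots,j)}\}$ denotes the set of all such $G$. The Moore–Penrose inverse $X^\dagger$ is the unique matrix satisfying all four equations. For a matrix expression involving generalized inverses, $\{\cdot\}$ denotes the set of all values of the expression as each generalized inverse occurring in it ranges over all admissible choices; repeated occurrences of the same symbol (e.g. $A^{(1)}$ appearing twice) denote one and the same choice, and a generalized inverse of a matrix that itself contains a chosen generalized inverse is taken with respect to that chosen matrix. *)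

theory Defs
  imports "Jordan_Normal_Form.Schur_Decomposition"
begin

definition gi12 :: "complex mat \<Rightarrow> complex mat set" where
  "gi12 X = {G. G \<in> carrier_mat (dim_col X) (dim_row X) \<and> X * G * X = X \<and> G * X * G = G}"

abbreviation ct :: "complex mat \<Rightarrow> complex mat" where
  "ct X \<equiv> mat_adjoint X"

end

theory Submission imports Defs begin


lemma ct_eq: "ct A = mat (dim_col A) (dim_row A) (\<lambda>(i,j). cnj (A $$ (j,i)))"
  unfolding mat_adjoint_def
  by (rule eq_matI) (auto simp: mat_of_rows_def)

lemma ct_dims[simp]: "dim_row (ct A) = dim_col A" "dim_col (ct A) = dim_row A"
  by (simp_all add: ct_eq)

lemma ct_index[simp]: "i < dim_col A \<Longrightarrow> j < dim_row A \<Longrightarrow> ct A $$ (i,j) = cnj (A $$ (j,i))"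
  by (simp add: ct_eq)

lemma ct_carrier: assumes "A \<in> carrier_mat m n" shows "ct A \<in> carrier_mat n m"
proof - have "dim_row A = m" "dim_col A = n" using assms by auto thus ?thesis by (intro carrier_matI) simp_all qed

lemma ct_ct[simp]: "ct (ct A) = A"
  by (rule eq_matI) auto

lemma ct_mult: "dim_col X = dim_row Y \<Longrightarrow> ct (X * Y) = ct Y * ct X"
  apply (rule eq_matI)
    apply (auto simp: scalar_prod_def)
  apply (rule sum.cong) apply auto
  done

lemma ct_zero: assumes "ct Y * Y = 0\<^sub>m (dim_col Y) (dim_col Y)" shows "Y = 0\<^sub>m (dim_row Y) (dim_col Y)"
proof (rule eq_matI)
  fix i j assume i: "i < dim_row (0\<^sub>m (dim_row Y) (dim_col Y))" and j: "j < dim_col (0\<^sub>m (dim_row Y) (dim_col Y))"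
  have "(ct Y * Y) $$ (j,j) = 0" using assms j by simp
  hence "(\<Sum>k<dim_row Y. cnj (Y $$ (k,j)) * Y $$ (k,j)) = 0"
    using j by (simp add: scalar_prod_def atLeast0LessThan)
  then have "(\<Sum>k<dim_row Y. complex_of_real ((cmod (Y $$ (k,j)))^2)) = 0"
  proof -
    have h: "\<And>k. cnj (Y$$(k,j)) * Y$$(k,j) = complex_of_real ((cmod (Y$$(k,j)))^2)"
      by (simp only: complex_norm_square mult.commute)
    hence "(\<Sum>k<dim_row Y. cnj (Y $$ (k, j)) * Y $$ (k, j)) = (\<Sum>k<dim_row Y. complex_of_real ((cmod (Y$$(k,j)))^2))"
      by (simp only: h)
    thus ?thesis using \<open>(\<Sum>k<dim_row Y. cnj (Y $$ (k, j)) * Y $$ (k, j)) = 0\<close> by argo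
  qed
  hence "(\<Sum>k<dim_row Y. (cmod (Y $$ (k,j)))^2) = 0"
  proof -
    assume h0: "(\<Sum>k<dim_row Y. complex_of_real ((cmod (Y $$ (k,j)))^2)) = 0"
    have "complex_of_real (\<Sum>k<dim_row Y. (cmod (Y $$ (k,j)))^2) = 0"
      unfolding of_real_sum by (rule h0)
    thus ?thesis by (simp only: of_real_eq_0_iff)
  qed
  hence "\<forall>k\<in>{..<dim_row Y}. (cmod (Y $$ (k,j)))^2 = 0"
    using sum_nonneg_eq_0_iff[of "{..<dim_row Y}" "\<lambda>k. (cmod (Y$$(k,j)))^2"] by simp
  hence "(cmod (Y $$ (i,j)))^2 = 0" using i by simp
  thus "Y $$ (i,j) = 0\<^sub>m (dim_row Y) (dim_col Y) $$ (i,j)" using i j by simp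
qed simp_all


lemma assoc': fixes X Y Z :: "complex mat"
  assumes "dim_col X = dim_row Y" "dim_col Y = dim_row Z" shows "X * Y * Z = X * (Y * Z)"
proof -
  have "X \<in> carrier_mat (dim_row X) (dim_col X)" "Y \<in> carrier_mat (dim_col X) (dim_col Y)"
     "Z \<in> carrier_mat (dim_col Y) (dim_col Z)" using assms unfolding carrier_mat_def by auto
  thus ?thesis by (rule assoc_mult_mat)
qed

lemma cancelL:
  assumes A: "A \<in> carrier_mat m n" and E: "E \<in> carrier_mat n k" and F: "F \<in> carrier_mat n k"
    and h: "ct A * (A * E) = ct A * (A * F)"
  shows "A * E = A * F"
proof -
  define D where "D = E - F"
  have D: "D \<in> carrier_mat n k" using E F by (simp add: D_def minus_carrier_mat)
  define Y where "Y = A * D"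
  have Y: "Y \<in> carrier_mat m k" using A D by (simp add: Y_def)
  have YE: "Y = A * E - A * F" unfolding Y_def D_def by (rule mult_minus_distrib_mat[OF A E F])
  have cA: "ct A \<in> carrier_mat n m" by (rule ct_carrier[OF A])
  have "ct A * Y = ct A * (A * E) - ct A * (A * F)"
    unfolding YE by (rule mult_minus_distrib_mat[OF cA mult_carrier_mat[OF A E] mult_carrier_mat[OF A F]])
  also have "\<dots> = 0\<^sub>m n k" unfolding h by (rule minus_r_inv_mat) (use A F cA in auto)
  finally have z: "ct A * Y = 0\<^sub>m n k" .
  have "ct Y = ct D * ct A" unfolding Y_def by (rule ct_mult) (use A D in auto)
  hence "ct Y * Y = ct D * (ct A * Y)" using A D Y by (simp add: assoc')
  also have "\<dots> = 0\<^sub>m k k" unfolding z using D by simp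
  finally have "Y = 0\<^sub>m m k" using ct_zero[of Y] Y by auto
  hence z: "A * E - A * F = 0\<^sub>m m k" unfolding YE .
  have dE: "dim_col E = k" "dim_col F = k" "dim_row A = m" using E F A by auto
  show ?thesis
  proof (rule eq_matI)
    fix i j assume i: "i < dim_row (A * F)" and j: "j < dim_col (A * F)"
    hence "(A * E - A * F) $$ (i,j) = 0" unfolding z using dE by simp
    thus "(A * E) $$ (i,j) = (A * F) $$ (i,j)" using i j dE by simp
  qed (simp_all add: dE)
qed

lemma cancelR:
  assumes B: "B \<in> carrier_mat n p" and E: "E \<in> carrier_mat k n" and F: "F \<in> carrier_mat k n"
    and h: "E * (B * ct B) = F * (B * ct B)"
  shows "E * B = F * B"
proof -
  have "ct (E * (B * ct B)) = ct (F * (B * ct B))" using h by simp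
  hence "B * (ct B * ct E) = B * (ct B * ct F)"
    using B E F by (simp add: ct_mult assoc')
  hence hh: "ct (ct B) * (ct B * ct E) = ct (ct B) * (ct B * ct F)"
    by simp
  have "ct B * ct E = ct B * ct F"
    by (rule cancelL[of "ct B" p n "ct E" k "ct F", OF _ _ _ hh]) (use ct_carrier[OF B] ct_carrier[OF E] ct_carrier[OF F] in auto)
  hence "ct (E * B) = ct (F * B)" using B E F by (simp add: ct_mult)
  hence "ct (ct (E * B)) = ct (ct (F * B))" by simp
  thus ?thesis by simp
qed


lemma absorbQ: fixes X Y Q :: "complex mat"
  assumes h: "X * Y * X = X" and d: "dim_col X = dim_row Y" "dim_col Y = dim_row X" "dim_row Q = dim_col X"
  shows "X * (Y * (X * Q)) = X * Q"
proof -
  have 1: "Y*X*Q = Y*(X*Q)" by (rule assoc') (use d in auto)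
  have 2: "X*Y*X = X*(Y*X)" by (rule assoc') (use d in auto)
  have 3: "X*(Y*X)*Q = X*(Y*X*Q)" by (rule assoc') (use d in auto)
  have "X * (Y * (X * Q)) = X * (Y * X * Q)" by (simp only: 1)
  also have "\<dots> = X * (Y * X) * Q" by (simp only: 3)
  also have "\<dots> = X * Q" by (simp only: 2[symmetric] h)
  finally show ?thesis .
qed
lemma absorb0: fixes X Y :: "complex mat"
  assumes h: "X * Y * X = X" and d: "dim_col X = dim_row Y" "dim_col Y = dim_row X"
  shows "X * (Y * X) = X"
proof -
  have 2: "X*Y*X = X*(Y*X)" by (rule assoc') (use d in auto)
  show ?thesis using 2 h by simp
qed

lemma gi12D: "G \<in> gi12 X \<Longrightarrow> dim_row G = dim_col X \<and> dim_col G = dim_row X \<and> X * G * X = X \<and> G * X * G = G"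
  by (auto simp: gi12_def)

lemma gi12I: "dim_row G = dim_col X \<Longrightarrow> dim_col G = dim_row X \<Longrightarrow> X * G * X = X \<Longrightarrow> G * X * G = G \<Longrightarrow> G \<in> gi12 X"
  unfolding gi12_def by (auto intro!: carrier_matI)


lemma cancelL2: fixes A E F :: "complex mat"
  assumes h: "ct A * (A * E) = ct A * (A * F)" and d: "dim_col A = dim_row E" "dim_row E = dim_row F" "dim_col E = dim_col F"
  shows "A * E = A * F"
proof -
  have "A \<in> carrier_mat (dim_row A) (dim_col A)" "E \<in> carrier_mat (dim_col A) (dim_col E)" "F \<in> carrier_mat (dim_col A) (dim_col E)"
    using d by (auto intro!: carrier_matI)
  thus ?thesis using cancelL h by blast
qed

lemma cancelR2: fixes B E F :: "complex mat"
  assumes h: "E * (B * ct B) = F * (B * ct B)" and d: "dim_col E = dim_row B" "dim_row E = dim_row F" "dim_col F = dim_row B"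
  shows "E * B = F * B"
proof -
  have "B \<in> carrier_mat (dim_row B) (dim_col B)" "E \<in> carrier_mat (dim_row E) (dim_row B)" "F \<in> carrier_mat (dim_row E) (dim_row B)"
    using d by (auto intro!: carrier_matI)
  thus ?thesis using cancelR h by blast
qed

context
  fixes A B :: "complex mat" and m n p :: nat
  assumes A: "A \<in> carrier_mat m n" and B: "B \<in> carrier_mat n p"
begin

lemma dA[simp]: "dim_row A = m" "dim_col A = n" using A by auto
lemma dB[simp]: "dim_row B = n" "dim_col B = p" using B by auto

lemma c1: assumes A1: "A1 \<in> gi12 A" and G: "G \<in> gi12 (A1*A*B)"
  shows "G*A1 \<in> gi12 (A*B)"
proof -
  have a1: "dim_row A1 = n" "dim_col A1 = m" "A * A1 * A = A" "A1 * A * A1 = A1" using gi12D[OF A1] by auto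
  have g: "dim_row G = p" "dim_col G = n" "A1*A*B*G*(A1*A*B) = A1*A*B" "G*(A1*A*B)*G = G" using gi12D[OF G] a1 by auto
  note d[simp] = a1(1,2) g(1,2)
  have "A*(A1*A*B*G*(A1*A*B)) = A*(A1*A*B)" using g by simp
  hence e1: "A*B*(G*A1)*(A*B) = A*B" by (simp add: assoc' absorbQ[OF a1(3)])
  have "G*(A1*A*B)*G*A1 = G*A1" using g by simp
  hence e2: "G*A1*(A*B)*(G*A1) = G*A1" by (simp add: assoc')
  show ?thesis by (rule gi12I) (use e1 e2 in auto)
qed


lemma c2: assumes B1: "B1 \<in> gi12 B" and G: "G \<in> gi12 (A*B*B1)"
  shows "B1*G \<in> gi12 (A*B)"
proof -
  have b1: "dim_row B1 = p" "dim_col B1 = n" "B * B1 * B = B" "B1 * B * B1 = B1" using gi12D[OF B1] by auto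
  have g: "dim_row G = n" "dim_col G = m" "A*B*B1*G*(A*B*B1) = A*B*B1" "G*(A*B*B1)*G = G" using gi12D[OF G] b1 by auto
  note d[simp] = b1(1,2) g(1,2)
  have "A*B*B1*G*(A*B*B1)*B = A*B*B1*B" using g by simp
  hence e1: "A*B*(B1*G)*(A*B) = A*B" by (simp add: assoc' absorbQ[OF b1(3)] absorb0[OF b1(3)])
  have "B1*(G*(A*B*B1)*G) = B1*G" using g by simp
  hence e2: "B1*G*(A*B)*(B1*G) = B1*G" by (simp add: assoc')
  show ?thesis by (rule gi12I) (use e1 e2 in auto)
qed

lemma c3: assumes G: "G \<in> gi12 (ct A*A*B)"
  shows "G*ct A \<in> gi12 (A*B)"
proof -
  have g: "dim_row G = p" "dim_col G = n" "ct A*A*B*G*(ct A*A*B) = ct A*A*B" "G*(ct A*A*B)*G = G" using gi12D[OF G] by auto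
  note d[simp] = g(1,2)
  have h1: "ct A*(A*(B*(G*(ct A*(A*B))))) = ct A*(A*B)" using g(3) by (simp add: assoc')
  have h2: "A*(B*(G*(ct A*(A*B)))) = A*B" by (rule cancelL2[OF h1]) simp_all
  hence e1: "A*B*(G*ct A)*(A*B) = A*B" by (simp add: assoc')
  have "G*(ct A*A*B)*G*ct A = G*ct A" using g by simp
  hence e2: "G*ct A*(A*B)*(G*ct A) = G*ct A" by (simp add: assoc')
  show ?thesis by (rule gi12I) (use e1 e2 in auto)
qed

lemma c4: assumes G: "G \<in> gi12 (A*B*ct B)"
  shows "ct B*G \<in> gi12 (A*B)"
proof -
  have g: "dim_row G = n" "dim_col G = m" "A*B*ct B*G*(A*B*ct B) = A*B*ct B" "G*(A*B*ct B)*G = G" using gi12D[OF G] by auto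
  note d[simp] = g(1,2)
  have h1: "(A*(B*(ct B*(G*A))))*(B*ct B) = A*(B*ct B)" using g(3) by (simp add: assoc')
  have h2: "(A*(B*(ct B*(G*A))))*B = A*B" by (rule cancelR2[OF h1]) simp_all
  hence e1: "A*B*(ct B*G)*(A*B) = A*B" by (simp add: assoc')
  have "ct B*(G*(A*B*ct B)*G) = ct B*G" using g by simp
  hence e2: "ct B*G*(A*B)*(ct B*G) = ct B*G" by (simp add: assoc')
  show ?thesis by (rule gi12I) (use e1 e2 in auto)
qed

lemma c5: assumes G: "G \<in> gi12 (A*ct A*A*B)"
  shows "G*A*ct A \<in> gi12 (A*B)"
proof -
  have g: "dim_row G = p" "dim_col G = m" "A*ct A*A*B*G*(A*ct A*A*B) = A*ct A*A*B" "G*(A*ct A*A*B)*G = G" using gi12D[OF G] by auto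
  note d[simp] = g(1,2)
  have h1: "ct (ct A) * (ct A * (A*(B*(G*(A*(ct A*(A*B))))))) = ct(ct A) * (ct A*(A*B))" using g(3) by (simp add: assoc')
  have h2: "ct A * (A*(B*(G*(A*(ct A*(A*B)))))) = ct A*(A*B)" by (rule cancelL2[OF h1]) simp_all
  have h3: "A*(B*(G*(A*(ct A*(A*B))))) = A*B" by (rule cancelL2[OF h2]) simp_all
  hence e1: "A*B*(G*A*ct A)*(A*B) = A*B" by (simp add: assoc')
  have "G*(A*ct A*A*B)*G*(A*ct A) = G*(A*ct A)" using g by simp
  hence e2: "G*A*ct A*(A*B)*(G*A*ct A) = G*A*ct A" by (simp add: assoc')
  show ?thesis by (rule gi12I) (use e1 e2 in auto)
qed

lemma c6: assumes G: "G \<in> gi12 (A*B*ct B*B)"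
  shows "ct B*B*G \<in> gi12 (A*B)"
proof -
  have g: "dim_row G = p" "dim_col G = m" "A*B*ct B*B*G*(A*B*ct B*B) = A*B*ct B*B" "G*(A*B*ct B*B)*G = G" using gi12D[OF G] by auto
  note d[simp] = g(1,2)
  have h1: "(A*(B*(ct B*(B*(G*(A*B))))))*(ct B * ct (ct B)) = A*B*(ct B*ct(ct B))" using g(3) by (simp add: assoc')
  have h2: "(A*(B*(ct B*(B*(G*(A*B))))))*ct B = A*B*ct B" by (rule cancelR2[OF h1]) simp_all
  have h3: "(A*(B*(ct B*(B*(G*A)))))*(B*ct B) = A*(B*ct B)" using h2 by (simp add: assoc')
  have h4: "(A*(B*(ct B*(B*(G*A)))))*B = A*B" by (rule cancelR2[OF h3]) simp_all
  hence e1: "A*B*(ct B*B*G)*(A*B) = A*B" by (simp add: assoc')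
  have "ct B*B*(G*(A*B*ct B*B)*G) = ct B*B*G" using g by simp
  hence e2: "ct B*B*G*(A*B)*(ct B*B*G) = ct B*B*G" by (simp add: assoc')
  show ?thesis by (rule gi12I) (use e1 e2 in auto)
qed

lemma c7: assumes A1: "A1 \<in> gi12 A" and B1: "B1 \<in> gi12 B" and G: "G \<in> gi12 (A1*A*B*B1)"
  shows "B1*G*A1 \<in> gi12 (A*B)"
proof -
  have a1: "dim_row A1 = n" "dim_col A1 = m" "A * A1 * A = A" "A1 * A * A1 = A1" using gi12D[OF A1] by auto
  have b1: "dim_row B1 = p" "dim_col B1 = n" "B * B1 * B = B" "B1 * B * B1 = B1" using gi12D[OF B1] by auto
  have g: "dim_row G = n" "dim_col G = n" "A1*A*B*B1*G*(A1*A*B*B1) = A1*A*B*B1" "G*(A1*A*B*B1)*G = G" using gi12D[OF G] a1 b1 by auto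
  note d[simp] = a1(1,2) b1(1,2) g(1,2)
  have "A*(A1*A*B*B1*G*(A1*A*B*B1))*B = A*(A1*A*B*B1)*B" using g by simp
  hence e1: "A*B*(B1*G*A1)*(A*B) = A*B" by (simp add: assoc' absorbQ[OF a1(3)] absorb0[OF a1(3)] absorbQ[OF b1(3)] absorb0[OF b1(3)])
  have "B1*(G*(A1*A*B*B1)*G)*A1 = B1*G*A1" using g by simp
  hence e2: "B1*G*A1*(A*B)*(B1*G*A1) = B1*G*A1" by (simp add: assoc')
  show ?thesis by (rule gi12I) (use e1 e2 in auto)
qed

lemma c8: assumes G: "G \<in> gi12 (ct A*A*B*ct B)"
  shows "ct B*G*ct A \<in> gi12 (A*B)"
proof -
  have g: "dim_row G = n" "dim_col G = n" "ct A*A*B*ct B*G*(ct A*A*B*ct B) = ct A*A*B*ct B" "G*(ct A*A*B*ct B)*G = G" using gi12D[OF G] by auto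
  note d[simp] = g(1,2)
  have h1: "ct A*(A*(B*(ct B*(G*(ct A*(A*(B*ct B))))))) = ct A*(A*(B*ct B))" using g(3) by (simp add: assoc')
  have h2: "A*(B*(ct B*(G*(ct A*(A*(B*ct B)))))) = A*(B*ct B)" by (rule cancelL2[OF h1]) simp_all
  have h3: "(A*(B*(ct B*(G*(ct A*A)))))*(B*ct B) = A*(B*ct B)" using h2 by (simp add: assoc')
  have h4: "(A*(B*(ct B*(G*(ct A*A)))))*B = A*B" by (rule cancelR2[OF h3]) simp_all
  hence e1: "A*B*(ct B*G*ct A)*(A*B) = A*B" by (simp add: assoc')
  have "ct B*(G*(ct A*A*B*ct B)*G)*ct A = ct B*G*ct A" using g by simp
  hence e2: "ct B*G*ct A*(A*B)*(ct B*G*ct A) = ct B*G*ct A" by (simp add: assoc')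
  show ?thesis by (rule gi12I) (use e1 e2 in auto)
qed

lemma c9: assumes G: "G \<in> gi12 (A*ct A*A*B*ct B*B)"
  shows "ct B*B*G*A*ct A \<in> gi12 (A*B)"
proof -
  have g: "dim_row G = p" "dim_col G = m" "A*ct A*A*B*ct B*B*G*(A*ct A*A*B*ct B*B) = A*ct A*A*B*ct B*B" "G*(A*ct A*A*B*ct B*B)*G = G" using gi12D[OF G] by auto
  note d[simp] = g(1,2)
  define R where "R = B*(ct B*(B*(G*(A*(ct A*(A*(B*(ct B*B))))))))"
  have dR[simp]: "dim_row R = n" "dim_col R = p" unfolding R_def by simp_all
  have h1: "ct(ct A)*(ct A*(A*R)) = ct(ct A)*(ct A*(A*(B*(ct B*B))))" unfolding R_def using g(3) by (simp add: assoc')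
  have h2: "ct A*(A*R) = ct A*(A*(B*(ct B*B)))" by (rule cancelL2[OF h1]) simp_all
  have h3: "A*R = A*(B*(ct B*B))" by (rule cancelL2[OF h2]) simp_all
  have h4: "(A*(B*(ct B*(B*(G*(A*(ct A*(A*B))))))))*(ct B*ct(ct B)) = A*B*(ct B*ct(ct B))" using h3 unfolding R_def by (simp add: assoc')
  have h5: "(A*(B*(ct B*(B*(G*(A*(ct A*(A*B))))))))*ct B = A*B*ct B" by (rule cancelR2[OF h4]) simp_all
  have h6: "(A*(B*(ct B*(B*(G*(A*(ct A*A)))))))*(B*ct B) = A*(B*ct B)" using h5 by (simp add: assoc')
  have h7: "(A*(B*(ct B*(B*(G*(A*(ct A*A)))))))*B = A*B" by (rule cancelR2[OF h6]) simp_all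
  hence e1: "A*B*(ct B*B*G*A*ct A)*(A*B) = A*B" by (simp add: assoc')
  have "ct B*B*(G*(A*ct A*A*B*ct B*B)*G)*A*ct A = ct B*B*G*A*ct A" using g by simp
  hence e2: "ct B*B*G*A*ct A*(A*B)*(ct B*B*G*A*ct A) = ct B*B*G*A*ct A" by (simp add: assoc')
  show ?thesis by (rule gi12I) (use e1 e2 in auto)
qed
end

theorem theorem3p1:
  fixes A B :: "complex mat" and m n p :: nat
  assumes "A \<in> carrier_mat m n" and "B \<in> carrier_mat n p"
  shows
   "({G * A1 | A1 G. A1 \<in> gi12 A \<and> G \<in> gi12 (A1 * A * B)} \<subseteq> gi12 (A * B))
    \<and> ({B1 * G | B1 G. B1 \<in> gi12 B \<and> G \<in> gi12 (A * B * B1)} \<subseteq> gi12 (A * B))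
    \<and> ({G * ct A | G. G \<in> gi12 (ct A * A * B)} \<subseteq> gi12 (A * B))
    \<and> ({ct B * G | G. G \<in> gi12 (A * B * ct B)} \<subseteq> gi12 (A * B))
    \<and> ({G * A * ct A | G. G \<in> gi12 (A * ct A * A * B)} \<subseteq> gi12 (A * B))
    \<and> ({ct B * B * G | G. G \<in> gi12 (A * B * ct B * B)} \<subseteq> gi12 (A * B))
    \<and> ({B1 * G * A1 | A1 B1 G. A1 \<in> gi12 A \<and> B1 \<in> gi12 B \<and> G \<in> gi12 (A1 * A * B * B1)}
      \<subseteq> gi12 (A * B))
    \<and> ({ct B * G * ct A | G. G \<in> gi12 (ct A * A * B * ct B)} \<subseteq> gi12 (A * B))
    \<and> ({ct B * B * G * A * ct A | G. G \<in> gi12 (A * ct A * A * B * ct B * B)} \<subseteq> gi12 (A * B))"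
    using c1[OF assms] c2[OF assms] c3[OF assms] c4[OF assms] c5[OF assms]
    c6[OF assms] c7[OF assms] c8[OF assms] c9[OF assms] by blast

end
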